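(* Let $N_0$ be a positive integer, $z\in\mathbb{C}$, $\nu\in[0,1/N_0]$, $0<b<1$, and assume that for all $t\in[b,1]$ we have $|1-tz|\le C$ for some constant $C<1$. Let $\theta = \arctan\left(\pi/|\log C|\right)$. If $m\ge1$ is an integer with $m\theta+2\pi/N_0\le\pi/2$, then the real part and the imaginary part of $\log^m(1-tz)\,(1-tz)^{-2\nu}$ each do not change sign for $t\in[b,1]$.
   Context: $\log$ and complex powers are taken with the principal branch, i.e. $(1-tz)^{-2\nu} = \exp(-2\nu\log(1-tz))$. *)

theory Defs
  imports "HOL-Analysis.Analysis"
begin

end

theory Submission
  imports Defs "HOL-Analysis.Analysis"
begin

lemma core:
  fixes w :: complex and \<nu> \<theta> Cc :: real and m N0 :: nat
  assumes w0: "w \<noteq> 0" and wC: "cmod w \<le> Cc" and C1: "Cc < 1" and N0: "N0 > 0"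
    and nu0: "0 \<le> \<nu>" and nu1: "\<nu> \<le> 1 / real N0"
    and th: "\<theta> = arctan (pi / \<bar>ln Cc\<bar>)"
    and mth: "real m * \<theta> + 2 * pi / real N0 \<le> pi / 2"
  defines "P \<equiv> (Ln w) ^ m * w powr (- 2 * complex_of_real \<nu>)"
  shows "(0 \<le> Arg w \<longrightarrow> 0 \<le> (-1)^m * Re P \<and> (-1)^m * Im P \<le> 0)
       \<and> (Arg w \<le> 0 \<longrightarrow> 0 \<le> (-1)^m * Re P \<and> 0 \<le> (-1)^m * Im P)"
proof -
  define a where "a = - ln (cmod w)"
  define \<phi> where "\<phi> = Arg w"
  have nw: "0 < cmod w" using w0 by simp
  have Cpos: "0 < Cc" using nw wC by linarith
  have lnC: "ln Cc < 0" using Cpos C1 by simp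
  have aC: "a \<ge> - ln Cc" unfolding a_def using nw Cpos wC by simp
  have apos: "a > 0" using aC lnC by linarith
  have phib: "\<bar>\<phi>\<bar> \<le> pi" unfolding \<phi>_def using mpi_less_Arg[of w] Arg_le_pi[of w] by auto
  define \<psi> where "\<psi> = arctan (\<phi> / a)"
  define \<rho> where "\<rho> = sqrt (a^2 + \<phi>^2)"
  have rpos: "\<rho> > 0" unfolding \<rho>_def using apos by (simp add: add_pos_nonneg)
  have sq: "sqrt (1 + (\<phi>/a)^2) = \<rho> / a"
  proof -
    have "1 + (\<phi>/a)^2 = (a^2 + \<phi>^2) / a^2" using apos by (simp add: field_simps power2_eq_square)
    then have "sqrt (1 + (\<phi>/a)^2) = sqrt (a^2 + \<phi>^2) / sqrt (a^2)" by (simp add: real_sqrt_divide)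
    then show ?thesis using apos by (simp add: \<rho>_def)
  qed
  have rc: "\<rho> * cos \<psi> = a" unfolding \<psi>_def cos_arctan sq using apos rpos by simp
  have rs: "\<rho> * sin \<psi> = \<phi>" unfolding \<psi>_def sin_arctan sq using apos rpos by simp
  have Lnw: "Ln w = - (of_real \<rho> * cis (- \<psi>))"
    using rc rs w0 by (simp add: Ln_Arg complex_eq_iff a_def \<phi>_def)
  have pw: "w powr (- 2 * complex_of_real \<nu>) = of_real (exp (2*\<nu>*a)) * cis (- (2*\<nu>*\<phi>))"
  proof -
    have e: "(- 2 * complex_of_real \<nu>) * Ln w = of_real (2*\<nu>*a) + \<i> * of_real (- (2*\<nu>*\<phi>))"
      using w0 by (simp add: Ln_Arg a_def \<phi>_def algebra_simps)
    have "w powr (- 2 * complex_of_real \<nu>) = exp ((- 2 * complex_of_real \<nu>) * Ln w)"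
      using w0 by (simp add: powr_def)
    also have "\<dots> = exp (of_real (2*\<nu>*a)) * exp (\<i> * of_real (- (2*\<nu>*\<phi>)))"
      by (simp only: e exp_add)
    also have "\<dots> = of_real (exp (2*\<nu>*a)) * cis (- (2*\<nu>*\<phi>))"
      by (simp only: exp_of_real cis_conv_exp)
    finally show ?thesis .
  qed
  define K where "K = \<rho>^m * exp (2*\<nu>*a)"
  define \<delta> where "\<delta> = real m * \<psi> + 2*\<nu>*\<phi>"
  have Kpos: "K > 0" unfolding K_def using rpos by simp
  have PP: "P = (-1)^m * of_real K * cis (- \<delta>)"
  proof -
    have "P = (-1)^m * of_real (\<rho>^m) * cis (- \<psi>) ^ m * (of_real (exp (2*\<nu>*a)) * cis (- (2*\<nu>*\<phi>)))"
      unfolding P_def Lnw pw power_minus[of "of_real \<rho> * cis (- \<psi>)"] power_mult_distrib of_real_power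
      by (simp only: mult.assoc)
    also have "\<dots> = (-1)^m * of_real K * (cis (- \<psi>) ^ m * cis (- (2*\<nu>*\<phi>)))"
      by (simp add: K_def)
    also have "cis (- \<psi>) ^ m * cis (- (2*\<nu>*\<phi>)) = cis (- \<delta>)"
      unfolding Complex.DeMoivre cis_mult by (rule arg_cong[where f=cis]) (simp add: \<delta>_def algebra_simps)
    finally show ?thesis .
  qed
  have sgn: "((-1::real)^m)^2 = 1" by (simp flip: power_mult add: mult.commute)
  have ReP: "(-1)^m * Re P = K * cos \<delta>"
  proof -
    have "Re P = (-1)^m * K * cos \<delta>" unfolding PP by (cases "even m") auto
    then show ?thesis using sgn by (simp add: power2_eq_square)
  qed
  have ImP: "(-1)^m * Im P = - K * sin \<delta>"
  proof -
    have "Im P = - ((-1)^m * K * sin \<delta>)" unfolding PP by (cases "even m") auto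
    then show ?thesis using sgn by (simp add: power2_eq_square)
  qed
  have tha: "\<bar>\<psi>\<bar> \<le> \<theta>"
  proof -
    have "\<bar>\<phi> / a\<bar> \<le> pi / \<bar>ln Cc\<bar>"
    proof -
      have "\<bar>\<phi> / a\<bar> = \<bar>\<phi>\<bar> / a" using apos by simp
      also have "\<dots> \<le> pi / a" using phib apos by (simp add: divide_right_mono)
      also have "\<dots> \<le> pi / \<bar>ln Cc\<bar>" using aC lnC apos by (intro divide_left_mono) (auto simp: mult_pos_neg)
      finally show ?thesis .
    qed
    then have "arctan \<bar>\<phi> / a\<bar> \<le> \<theta>" unfolding th by (simp add: arctan_le_iff)
    moreover have "\<bar>arctan x\<bar> = arctan \<bar>x\<bar>" for x :: real
      by (cases "x \<ge> 0") (simp_all add: arctan_minus)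
    then have "\<bar>\<psi>\<bar> = arctan \<bar>\<phi> / a\<bar>" unfolding \<psi>_def by blast
    ultimately show ?thesis by simp
  qed
  have nphi: "2*\<nu>*\<bar>\<phi>\<bar> \<le> 2*pi/real N0"
  proof -
    have "\<nu> * \<bar>\<phi>\<bar> \<le> (1/real N0) * pi" using nu0 nu1 phib by (intro mult_mono) auto
    then show ?thesis by simp
  qed
  have mps: "real m * \<bar>\<psi>\<bar> \<le> real m * \<theta>" using tha by (simp add: mult_left_mono)
  show ?thesis
  proof (intro conjI impI)
    assume "0 \<le> Arg w"
    then have p0: "\<phi> \<ge> 0" by (simp add: \<phi>_def)
    then have "\<psi> \<ge> 0" using apos by (simp add: \<psi>_def)
    then have d0: "0 \<le> \<delta>" unfolding \<delta>_def using p0 nu0 by simp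
    have d1: "\<delta> \<le> pi/2" unfolding \<delta>_def using mps nphi mth \<open>\<psi> \<ge> 0\<close> p0 by simp
    have "cos \<delta> \<ge> 0" using d0 d1 by (intro cos_ge_zero) auto
    then show "0 \<le> (-1)^m * Re P" using ReP Kpos by simp
    have "sin \<delta> \<ge> 0" using d0 d1 by (intro sin_ge_zero) auto
    then show "(-1)^m * Im P \<le> 0" using ImP Kpos by simp
  next
    assume "Arg w \<le> 0"
    then have p0: "\<phi> \<le> 0" by (simp add: \<phi>_def)
    then have "\<psi> \<le> 0" using apos by (simp add: \<psi>_def divide_nonpos_pos)
    then have d0: "\<delta> \<le> 0" unfolding \<delta>_def using p0 nu0 \<open>\<psi> \<le> 0\<close> mult_nonneg_nonpos[of "real m" \<psi>] mult_nonneg_nonpos[of \<nu> \<phi>] by linarith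
    have d1: "-\<delta> \<le> pi/2" unfolding \<delta>_def using mps nphi mth \<open>\<psi> \<le> 0\<close> p0 by simp
    have "cos \<delta> \<ge> 0" using d0 d1 by (intro cos_ge_zero) auto
    then show "0 \<le> (-1)^m * Re P" using ReP Kpos by simp
    have "sin (-\<delta>) \<ge> 0" using d0 d1 by (intro sin_ge_zero) auto
    then show "0 \<le> (-1)^m * Im P" using ImP Kpos by (simp add: mult_nonneg_nonpos less_imp_le)
  qed
qed


theorem lemmaB4:
  fixes N0 m :: nat and z :: complex and \<nu> b C \<theta> :: real
  assumes "N0 > 0"
    and "0 \<le> \<nu>" and "\<nu> \<le> 1 / real N0"
    and "0 < b" and "b < 1"
    and "C < 1"
    and "\<forall>t\<in>{b..1}. cmod (1 - complex_of_real t * z) \<le> C"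
    and "\<theta> = arctan (pi / \<bar>ln C\<bar>)"
    and "m \<ge> 1"
    and "real m * \<theta> + 2 * pi / real N0 \<le> pi / 2"
  shows "((\<forall>t\<in>{b..1}. Re ((Ln (1 - complex_of_real t * z)) ^ m * (1 - complex_of_real t * z) powr (- 2 * complex_of_real \<nu>)) \<ge> 0)
          \<or> (\<forall>t\<in>{b..1}. Re ((Ln (1 - complex_of_real t * z)) ^ m * (1 - complex_of_real t * z) powr (- 2 * complex_of_real \<nu>)) \<le> 0))
       \<and> ((\<forall>t\<in>{b..1}. Im ((Ln (1 - complex_of_real t * z)) ^ m * (1 - complex_of_real t * z) powr (- 2 * complex_of_real \<nu>)) \<ge> 0)
          \<or> (\<forall>t\<in>{b..1}. Im ((Ln (1 - complex_of_real t * z)) ^ m * (1 - complex_of_real t * z) powr (- 2 * complex_of_real \<nu>)) \<le> 0))"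
proof -
  define P where "P t = (Ln (1 - complex_of_real t * z)) ^ m * (1 - complex_of_real t * z) powr (- 2 * complex_of_real \<nu>)" for t
  have key: "(0 \<le> Arg (1 - complex_of_real t * z) \<longrightarrow> 0 \<le> (-1)^m * Re (P t) \<and> (-1)^m * Im (P t) \<le> 0)
       \<and> (Arg (1 - complex_of_real t * z) \<le> 0 \<longrightarrow> 0 \<le> (-1)^m * Re (P t) \<and> 0 \<le> (-1)^m * Im (P t))"
    if t: "t \<in> {b..1}" for t
  proof (cases "1 - complex_of_real t * z = 0")
    case True
    then have "P t = 0" unfolding P_def by (simp add: powr_def)
    then show ?thesis by simp
  next
    case False
    show ?thesis unfolding P_def
      by (rule core[OF False _ assms(6) assms(1) assms(2) assms(3) assms(8) assms(10)]) (use assms(7) t in blast)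
  qed
  have Imw: "Im (1 - complex_of_real t * z) = - t * Im z" for t by simp
  have A: "(\<forall>t\<in>{b..1}. 0 \<le> (-1)^m * Re (P t)) \<and>
     ((\<forall>t\<in>{b..1}. (-1)^m * Im (P t) \<le> 0) \<or> (\<forall>t\<in>{b..1}. 0 \<le> (-1)^m * Im (P t)))"
  proof (cases "Im z \<le> 0")
    case True
    have "0 \<le> Arg (1 - complex_of_real t * z)" if "t \<in> {b..1}" for t
      unfolding Arg_less_0 Imw using True that assms(4) by (simp add: mult_nonneg_nonpos)
    then show ?thesis using key by blast
  next
    case False
    have "Arg (1 - complex_of_real t * z) \<le> 0" if "t \<in> {b..1}" for t
    proof -
      have "Im (1 - complex_of_real t * z) < 0" unfolding Imw using False that assms(4) by simp
      then show ?thesis using Arg_neg_iff by (metis less_imp_le)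
    qed
    then show ?thesis using key by blast
  qed
  have G: "((\<forall>t\<in>{b..1}. Re (P t) \<ge> 0) \<or> (\<forall>t\<in>{b..1}. Re (P t) \<le> 0))
       \<and> ((\<forall>t\<in>{b..1}. Im (P t) \<ge> 0) \<or> (\<forall>t\<in>{b..1}. Im (P t) \<le> 0))"
  proof (cases "even m")
    case True
    then have "(-1::real)^m = 1" by simp
    then show ?thesis using A by auto
  next
    case False
    then have "(-1::real)^m = -1" by simp
    then show ?thesis using A by force
  qed
  then show ?thesis unfolding P_def .
qed

end
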